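(* Let $R$ be a semi-local ring with maximal ideals $M_1,\dots,M_t$, and $n$ a positive integer. If for all nonnegative integers $\alpha_1,\dots,\alpha_t$ with $\alpha_1+\cdots+\alpha_t=n+1$ we have $M_1^{\alpha_1}\cdots M_t^{\alpha_t}=\{0\}$, then every proper ideal of $R$ is weakly $n$-absorbing.
   Context: All rings are commutative with $1\neq0$; a semi-local ring has finitely many maximal ideals. A proper ideal $I$ of $R$ is weakly $n$-absorbing if whenever $0\neq a_1\cdots a_{n+1}\in I$ with $a_1,\dots,a_{n+1}\in R$, there are $n$ of the $a_i$'s whose product is in $I$. *)

theory Defs
  imports "HOL-Algebra.Algebra"
begin

definition weakly_n_absorbing :: "('a, 'b) ring_scheme \<Rightarrow> nat \<Rightarrow> 'a set \<Rightarrow> bool" where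
  "weakly_n_absorbing R n I \<longleftrightarrow>
     ideal I R \<and> I \<noteq> carrier R \<and>
     (\<forall>a :: nat \<Rightarrow> 'a. (\<forall>i\<le>n. a i \<in> carrier R) \<longrightarrow>
        finprod R a {..n} \<noteq> \<zero>\<^bsub>R\<^esub> \<longrightarrow> finprod R a {..n} \<in> I \<longrightarrow>
        (\<exists>j\<le>n. finprod R a ({..n} - {j}) \<in> I))"

end

theory Submission
  imports Defs
begin

lemma (in cring) krull_elem:
  assumes a: "a \<in> carrier R" "a \<notin> Units R"
  shows "\<exists>M. maximalideal M R \<and> a \<in> M"
proof -
  define S where "S = {I. ideal I R \<and> a \<in> I \<and> \<one> \<notin> I}"
  have "PIdl a \<in> S"
  proof -
    have "\<one> \<notin> PIdl a"
    proof
      assume "\<one> \<in> PIdl a"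
      then obtain x where x: "x \<in> carrier R" "\<one> = x \<otimes> a" unfolding cgenideal_def by auto
      hence "a \<in> Units R" using a(1) unfolding Units_def by (auto simp: m_comm intro: bexI[of _ x])
      thus False using a by simp
    qed
    thus ?thesis unfolding S_def using cgenideal_ideal cgenideal_self a(1) by auto
  qed
  hence "S \<noteq> {}" by auto
  then have "\<exists>N\<in>S. \<forall>Y\<in>S. N \<subseteq> Y \<longrightarrow> Y = N"
  proof (rule subset_Zorn_nonempty)
    fix C assume C: "C \<noteq> {}" "subset.chain S C"
    hence ch: "subset.chain {I. ideal I R} C" unfolding pred_on.chain_def S_def by auto
    have "ideal (\<Union>C) R" using chain_Union_is_ideal[OF ch] C(1) by simp
    moreover have "a \<in> \<Union>C" "\<one> \<notin> \<Union>C" using C unfolding pred_on.chain_def S_def by auto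
    ultimately show "\<Union>C \<in> S" unfolding S_def by auto
  qed
  then obtain M where M: "M \<in> S" "\<And>Y. Y \<in> S \<Longrightarrow> M \<subseteq> Y \<Longrightarrow> Y = M" by auto
  have "maximalideal M R"
  proof (rule maximalidealI)
    show "ideal M R" using M unfolding S_def by auto
    show "carrier R \<noteq> M" using M unfolding S_def by auto
    fix J assume J: "ideal J R" "M \<subseteq> J" "J \<subseteq> carrier R"
    show "J = M \<or> J = carrier R"
    proof (cases "\<one> \<in> J")
      case True thus ?thesis using ideal.one_imp_carrier[OF J(1)] by auto
    next
      case False
      hence "J \<in> S" using J M(1) unfolding S_def by auto
      thus ?thesis using M(2) J(2) by auto
    qed
  qed
  thus ?thesis using M unfolding S_def by auto
qed

lemma card_fibers:
  fixes k :: "nat \<Rightarrow> nat"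
  assumes "finite S" "k ` S \<subseteq> T" "finite T"
  shows "(\<Sum>m\<in>T. card {i\<in>S. k i = m}) = card S"
  using assms
proof (induction S rule: finite_induct)
  case empty then show ?case by simp
next
  case (insert s S)
  have "(\<Sum>m\<in>T. card {i\<in>insert s S. k i = m}) = (\<Sum>m\<in>T. card {i\<in>S. k i = m} + (if m = k s then 1 else 0))"
  proof (rule sum.cong)
    fix m assume "m \<in> T"
    show "card {i\<in>insert s S. k i = m} = card {i\<in>S. k i = m} + (if m = k s then 1 else 0)"
    proof (cases "m = k s")
      case True
      hence "{i\<in>insert s S. k i = m} = insert s {i\<in>S. k i = m}" by auto
      thus ?thesis using True insert by simp
    next
      case False
      hence "{i\<in>insert s S. k i = m} = {i\<in>S. k i = m}" by auto
      thus ?thesis using False by simp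
    qed
  qed simp
  also have "\<dots> = card S + 1" using insert by (simp add: sum.distrib)
  finally show ?case using insert by simp
qed

lemma (in cring) prod_in_idealprod:
  fixes t :: nat and k :: "nat \<Rightarrow> nat" and S :: "nat set"
  assumes M: "\<forall>m<t. ideal (M m) R"
  shows "finite S \<Longrightarrow> (\<forall>i\<in>S. a i \<in> carrier R \<and> k i < t \<and> a i \<in> M (k i)) \<Longrightarrow>
    finprod R a S \<in> (\<Otimes>\<^bsub>ideals_set R\<^esub> m\<in>{..<t}. M m [^]\<^bsub>ideals_set R\<^esub> card {i\<in>S. k i = m})"
proof (induction S rule: finite_induct)
  interpret IS: comm_monoid "ideals_set R" by (rule ideals_set_is_comm_monoid)
  case empty
  have "(\<lambda>m. M m [^]\<^bsub>ideals_set R\<^esub> card {i\<in>{}. k i = m}) = (\<lambda>m. \<one>\<^bsub>ideals_set R\<^esub>)"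
    by (rule ext) simp
  hence "(\<Otimes>\<^bsub>ideals_set R\<^esub> m\<in>{..<t}. M m [^]\<^bsub>ideals_set R\<^esub> card {i\<in>{}. k i = m}) = \<one>\<^bsub>ideals_set R\<^esub>"
    using IS.finprod_one by simp
  also have "\<dots> = carrier R" by (simp add: ideals_set_def)
  finally have E: "(\<Otimes>\<^bsub>ideals_set R\<^esub> m\<in>{..<t}. M m [^]\<^bsub>ideals_set R\<^esub> card {i\<in>{}. k i = m}) = carrier R" .
  show ?case by (subst E) simp
next
  interpret IS: comm_monoid "ideals_set R" by (rule ideals_set_is_comm_monoid)
  case (insert s S)
  define F where "F = (\<lambda>m. M m [^]\<^bsub>ideals_set R\<^esub> card {i\<in>S. k i = m})"
  define F' where "F' = (\<lambda>m. M m [^]\<^bsub>ideals_set R\<^esub> card {i\<in>insert s S. k i = m})"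
  have ks: "k s < t" "a s \<in> M (k s)" "a s \<in> carrier R" using insert by auto
  have Mc: "\<And>m. m < t \<Longrightarrow> M m \<in> carrier (ideals_set R)" using M by (simp add: ideals_set_def)
  have Fc: "F \<in> {..<t} \<rightarrow> carrier (ideals_set R)" using Mc unfolding F_def by auto
  have F'c: "F' \<in> {..<t} \<rightarrow> carrier (ideals_set R)" using Mc unfolding F'_def by auto
  have eqo: "\<And>m. m \<noteq> k s \<Longrightarrow> F' m = F m" unfolding F_def F'_def by (metis (lifting) insert_iff mem_Collect_eq)
  have "{i\<in>insert s S. k i = k s} = insert s {i\<in>S. k i = k s}" by auto
  hence "card {i\<in>insert s S. k i = k s} = Suc (card {i\<in>S. k i = k s})" using insert by simp
  hence eqk: "F' (k s) = M (k s) \<otimes>\<^bsub>ideals_set R\<^esub> F (k s)"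
    unfolding F_def F'_def using IS.nat_pow_Suc2 Mc ks(1) by simp
  have T: "{..<t} = insert (k s) ({..<t} - {k s})" using ks by auto
  have "finprod (ideals_set R) F' {..<t} = F' (k s) \<otimes>\<^bsub>ideals_set R\<^esub> finprod (ideals_set R) F' ({..<t} - {k s})"
    by (subst T, rule IS.finprod_insert) (use F'c ks in auto)
  also have "finprod (ideals_set R) F' ({..<t} - {k s}) = finprod (ideals_set R) F ({..<t} - {k s})"
    by (rule IS.finprod_cong') (use eqo Fc in auto)
  also have "F' (k s) \<otimes>\<^bsub>ideals_set R\<^esub> finprod (ideals_set R) F ({..<t} - {k s}) =
       M (k s) \<otimes>\<^bsub>ideals_set R\<^esub> (F (k s) \<otimes>\<^bsub>ideals_set R\<^esub> finprod (ideals_set R) F ({..<t} - {k s}))"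
    unfolding eqk by (rule IS.m_assoc) (use Mc ks Fc in \<open>auto intro!: IS.finprod_closed\<close>)
  also have "F (k s) \<otimes>\<^bsub>ideals_set R\<^esub> finprod (ideals_set R) F ({..<t} - {k s}) = finprod (ideals_set R) F {..<t}"
    by (subst (2) T, rule IS.finprod_insert[symmetric]) (use Fc ks in auto)
  finally have E: "finprod (ideals_set R) F' {..<t} = ideal_prod R (M (k s)) (finprod (ideals_set R) F {..<t})"
    by (simp add: ideals_set_def)
  have "finprod R a (insert s S) = a s \<otimes> finprod R a S"
    by (rule finprod_insert) (use insert in auto)
  also have "\<dots> \<in> ideal_prod R (M (k s)) (finprod (ideals_set R) F {..<t})"
    by (rule ideal_prod.prod) (use ks insert F_def in auto)
  finally show ?case using E F'_def by simp
qed
theorem mainTheorem19: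
  fixes R :: "('a, 'b) ring_scheme" and M :: "nat \<Rightarrow> 'a set" and t n :: nat
  assumes "cring R" and "\<one>\<^bsub>R\<^esub> \<noteq> \<zero>\<^bsub>R\<^esub>"
    and "{I. maximalideal I R} = M ` {..<t}" and "inj_on M {..<t}"
    and "n > 0"
    and "\<forall>\<alpha> :: nat \<Rightarrow> nat. (\<Sum>i<t. \<alpha> i) = n + 1 \<longrightarrow>
           (\<Otimes>\<^bsub>ideals_set R\<^esub> i\<in>{..<t}. M i [^]\<^bsub>ideals_set R\<^esub> \<alpha> i) = {\<zero>\<^bsub>R\<^esub>}"
  shows "\<forall>I. ideal I R \<and> I \<noteq> carrier R \<longrightarrow> weakly_n_absorbing R n I"
proof (intro allI impI)
  interpret cring R by fact
  fix I assume I: "ideal I R \<and> I \<noteq> carrier R"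
  have Mid: "\<forall>m<t. ideal (M m) R"
  proof (intro allI impI)
    fix m assume "m < t"
    hence "M m \<in> {I. maximalideal I R}" using assms(3) by auto
    thus "ideal (M m) R" using maximalideal.axioms(1) by auto
  qed
  show "weakly_n_absorbing R n I"
    unfolding weakly_n_absorbing_def
  proof (intro conjI allI impI)
    show "ideal I R" "I \<noteq> carrier R" using I by auto
    fix a :: "nat \<Rightarrow> 'a"
    assume ac: "\<forall>i\<le>n. a i \<in> carrier R" and nz: "finprod R a {..n} \<noteq> \<zero>\<^bsub>R\<^esub>"
      and inI: "finprod R a {..n} \<in> I"
    have acP: "a \<in> {..n} \<rightarrow> carrier R" using ac by auto
    show "\<exists>j\<le>n. finprod R a ({..n} - {j}) \<in> I"
    proof (cases "\<exists>j\<le>n. a j \<in> Units R")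
      case True
      then obtain j where j: "j \<le> n" "a j \<in> Units R" by auto
      have T: "{..n} = insert j ({..n} - {j})" using j by auto
      have P'c: "finprod R a ({..n} - {j}) \<in> carrier R" using acP by (auto intro: finprod_closed)
      have "finprod R a {..n} = a j \<otimes>\<^bsub>R\<^esub> finprod R a ({..n} - {j})"
        by (subst T, rule finprod_insert) (use acP j in auto)
      hence "inv\<^bsub>R\<^esub> (a j) \<otimes>\<^bsub>R\<^esub> finprod R a {..n} = finprod R a ({..n} - {j})"
        using j P'c by (simp add: m_assoc[symmetric] Units_closed)
      moreover have "inv\<^bsub>R\<^esub> (a j) \<otimes>\<^bsub>R\<^esub> finprod R a {..n} \<in> I"
        using inI j I by (auto intro: ideal.I_l_closed)
      ultimately show ?thesis using j by auto
    next
      case False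
      have "\<forall>i\<in>{..n}. \<exists>m. m < t \<and> a i \<in> M m"
      proof
        fix i assume i: "i \<in> {..n}"
        then obtain N where N: "maximalideal N R" "a i \<in> N"
          using krull_elem[of "a i"] ac False by auto
        hence "N \<in> M ` {..<t}" using assms(3) by auto
        thus "\<exists>m. m < t \<and> a i \<in> M m" using N by auto
      qed
      then obtain k where k: "\<forall>i\<in>{..n}. k i < t \<and> a i \<in> M (k i)" by metis
      define \<alpha> where "\<alpha> = (\<lambda>m. card {i\<in>{..n}. k i = m})"
      have "(\<Sum>m<t. \<alpha> m) = card {..n}"
        unfolding \<alpha>_def by (rule card_fibers) (use k in auto)
      hence "(\<Sum>m<t. \<alpha> m) = n + 1" by simp
      hence Z: "(\<Otimes>\<^bsub>ideals_set R\<^esub> i\<in>{..<t}. M i [^]\<^bsub>ideals_set R\<^esub> \<alpha> i) = {\<zero>\<^bsub>R\<^esub>}"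
        using assms(6) by blast
      have "finprod R a {..n} \<in> (\<Otimes>\<^bsub>ideals_set R\<^esub> m\<in>{..<t}. M m [^]\<^bsub>ideals_set R\<^esub> card {i\<in>{..n}. k i = m})"
        by (rule prod_in_idealprod[OF Mid]) (use k ac in auto)
      hence "finprod R a {..n} \<in> {\<zero>\<^bsub>R\<^esub>}" using Z unfolding \<alpha>_def by simp
      thus ?thesis using nz by simp
    qed
  qed
qed

end
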